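(* For every integer $k\ge 1$, let $\mathcal{L}^2(k)=\gcd\{\sum_{i=1}^k L_{n+i}^2 : n \ge 0\}$. Then $$\mathcal{L}^2(k) = \begin{cases} 5F_k, & \text{if $k$ is even},\\ 2, & \text{if $k \equiv 3 \pmod{6}$},\\ 1, & \text{if $k \equiv 1,5 \pmod{6}$}.\end{cases}$$
   Context: $(L_n)$ is the Lucas sequence: $L_0=2$, $L_1=1$, $L_n=L_{n-1}+L_{n-2}$; $(F_n)$ is the Fibonacci sequence: $F_0=0$, $F_1=1$, $F_n=F_{n-1}+F_{n-2}$. *)

theory Defs
  imports "HOL-Number_Theory.Fib"
begin

fun lucas :: "nat \<Rightarrow> nat" where
  "lucas 0 = 2"
| "lucas (Suc 0) = 1"
| "lucas (Suc (Suc n)) = lucas (Suc n) + lucas n"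

definition lucas_sq_gcd :: "nat \<Rightarrow> nat" where
  "lucas_sq_gcd k = Gcd {\<Sum>i=1..k. (lucas (n + i))^2 | n. True}"

end

theory Submission imports Defs begin

definition ph :: real where "ph = (1 + sqrt 5) / 2"
definition ps :: real where "ps = (1 - sqrt 5) / 2"

lemma phps: "ph * ps = -1" by (simp add: ph_def ps_def field_simps power2_eq_square)
lemma ph2: "ph^2 = ph + 1" by (simp add: ph_def field_simps power2_eq_square)
lemma ps2: "ps^2 = ps + 1" by (simp add: ps_def field_simps power2_eq_square)

lemma lucas_binet: "real (lucas n) = ph^n + ps^n"
proof (induction n rule: lucas.induct)
  case 1 then show ?case by simp
next
  case 2 then show ?case by (simp add: ph_def ps_def field_simps)
next
  case (3 n)
  have "real (lucas (Suc (Suc n))) = (ph^n + ps^n) + (ph^Suc n + ps^Suc n)" using 3 by simp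
  also have "... = ph^n * (ph + 1) + ps^n * (ps+1)" by (simp add: algebra_simps)
  also have "... = ph ^ Suc (Suc n) + ps ^ Suc (Suc n)" by (simp add: ph2[symmetric] ps2[symmetric] power2_eq_square)
  finally show ?case .
qed

lemma fib_binet: "real (fib n) * sqrt 5 = ph^n - ps^n"
  using fib_closed_form[of n] by (simp add: ph_def ps_def)

lemma sq5: "sqrt 5 * sqrt 5 = (5::real)" by simp

lemma lucas_sq: "(real (lucas m))^2 = real (lucas (2*m)) + 2 * (-1)^m"
proof -
  have "(real (lucas m))^2 = (ph^m)^2 + (ps^m)^2 + 2 * (ph*ps)^m"
    by (simp add: lucas_binet power2_sum power_mult_distrib)
  also have "... = real (lucas (2*m)) + 2 * (-1)^m"
    by (simp add: lucas_binet phps power_mult[symmetric] mult.commute)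
  finally show ?thesis .
qed

lemma sign_sum: "(\<Sum>i=1..k. (-1::real)^(n+i)) = (if even k then 0 else (-1)^(n+1))"
  by (induction k) (auto simp: power_add)

lemma sum_formula: "real (\<Sum>i=1..k. (lucas (n + i))^2)
   = real (lucas (2*n+2*k+1)) - real (lucas (2*n+1)) + 2 * (\<Sum>i=1..k. (-1::real)^(n+i))"
proof (induction k)
  case 0 then show ?case by simp
next
  case (Suc k)
  have e: "lucas (2*n+2*Suc k+1) = lucas (2*(n+Suc k)) + lucas (2*n+2*k+1)"
    using lucas.simps(3)[of "2*n+2*k+1"] by (simp add: algebra_simps)
  have "real (\<Sum>i=1..Suc k. (lucas (n + i))^2) = real (\<Sum>i=1..k. (lucas (n + i))^2) + (real (lucas (n+Suc k)))^2"
    by simp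
  then show ?case using Suc e lucas_sq[of "n + Suc k"] by simp
qed

lemma id1: "5 * real (fib k) * real (fib (m+k)) = real (lucas (m+2*k)) - (-1)^k * real (lucas m)"
proof -
  have "5 * real (fib k) * real (fib (m+k)) = (real (fib k) * sqrt 5) * (real (fib (m+k)) * sqrt 5)"
    by (simp add: algebra_simps)
  also have "... = (ph^k - ps^k) * (ph^(m+k) - ps^(m+k))" by (simp only: fib_binet)
  also have "... = ph^(m+2*k) + ps^(m+2*k) - (ph*ps)^k * (ph^m + ps^m)"
    by (simp only: power_add mult_2 power_mult_distrib) (simp add: algebra_simps)
  also have "... = real (lucas (m+2*k)) - (-1)^k * real (lucas m)"
    by (simp add: lucas_binet phps)
  finally show ?thesis .
qed

lemma id2: "real (lucas k) * real (lucas (m+k)) = real (lucas (m+2*k)) + (-1)^k * real (lucas m)"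
proof -
  have "real (lucas k) * real (lucas (m+k)) = (ph^k + ps^k) * (ph^(m+k) + ps^(m+k))" by (simp only: lucas_binet)
  also have "... = ph^(m+2*k) + ps^(m+2*k) + (ph*ps)^k * (ph^m + ps^m)"
    by (simp only: power_add mult_2 power_mult_distrib) (simp add: algebra_simps)
  also have "... = real (lucas (m+2*k)) + (-1)^k * real (lucas m)"
    by (simp add: lucas_binet phps)
  finally show ?thesis .
qed

lemma lucas_mod2: "lucas n mod 2 = (if n mod 3 = 0 then 0 else 1) \<and> lucas (Suc n) mod 2 = (if Suc n mod 3 = 0 then 0 else 1)"
proof (induction n)
  case 0 then show ?case by simp
next
  case (Suc n)
  have e: "lucas (Suc (Suc n)) mod 2 = (lucas (Suc n) mod 2 + lucas n mod 2) mod 2"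
    by (simp add: mod_add_eq)
  have "n mod 3 = 0 \<and> Suc n mod 3 = 1 \<and> Suc (Suc n) mod 3 = 2 \<or> n mod 3 = 1 \<and> Suc n mod 3 = 2 \<and> Suc (Suc n) mod 3 = 0
     \<or> n mod 3 = 2 \<and> Suc n mod 3 = 0 \<and> Suc (Suc n) mod 3 = 1" by presburger
  then show ?case using Suc e by (elim disjE) simp_all
qed

fun f5 :: "nat \<Rightarrow> nat" where "f5 r = (if r = 0 then 2 else if r = 1 then 1 else if r = 2 then 3 else 4)"

lemma lucas_mod5: "lucas n mod 5 = f5 (n mod 4) \<and> lucas (Suc n) mod 5 = f5 (Suc n mod 4)"
proof (induction n)
  case 0 then show ?case by simp
next
  case (Suc n)
  have e: "lucas (Suc (Suc n)) mod 5 = (lucas (Suc n) mod 5 + lucas n mod 5) mod 5"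
    by (simp add: mod_add_eq)
  have "n mod 4 = 0 \<and> Suc n mod 4 = 1 \<and> Suc (Suc n) mod 4 = 2 \<or> n mod 4 = 1 \<and> Suc n mod 4 = 2 \<and> Suc (Suc n) mod 4 = 3
     \<or> n mod 4 = 2 \<and> Suc n mod 4 = 3 \<and> Suc (Suc n) mod 4 = 0 \<or> n mod 4 = 3 \<and> Suc n mod 4 = 0 \<and> Suc (Suc n) mod 4 = 1" by presburger
  then show ?case using Suc e by (elim disjE) simp_all
qed

lemma dvd10: "(c::nat) dvd 10 \<Longrightarrow> c = 1 \<or> c = 2 \<or> c = 5 \<or> c = 10"
proof -
  assume a: "c dvd 10"
  then have "c \<le> 10" by (rule dvd_imp_le) simp
  then have "c = 0 \<or> c = 1 \<or> c = 2 \<or> c = 3 \<or> c = 4 \<or> c = 5 \<or> c = 6 \<or> c = 7 \<or> c = 8 \<or> c = 9 \<or> c = 10" by arith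
  then show ?thesis using a by (elim disjE) simp_all
qed

lemma S_even:
  assumes "even k"
  shows "(\<Sum>i=1..k. (lucas (n + i))^2) = 5 * fib k * fib (2*n+1+k)"
proof -
  have "real (\<Sum>i=1..k. (lucas (n + i))^2) = real (lucas (2*n+2*k+1)) - real (lucas (2*n+1))"
    using sum_formula[where k=k and n=n] sign_sum[where k=k and n=n] assms by simp
  also have "... = 5 * real (fib k) * real (fib (2*n+1+k))"
    using id1[of k "2*n+1"] assms by (simp add: algebra_simps)
  finally have "real (\<Sum>i=1..k. (lucas (n + i))^2) = real (5 * fib k * fib (2*n+1+k))" by simp
  then show ?thesis by (simp only: of_nat_eq_iff)
qed

lemma S_odd:
  assumes "odd k"
  shows "int (\<Sum>i=1..k. (lucas (n + i))^2) = int (lucas k) * int (lucas (2*n+1+k)) + 2 * (-1)^(n+1)"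
proof -
  have "real (\<Sum>i=1..k. (lucas (n + i))^2) = real (lucas (2*n+2*k+1)) - real (lucas (2*n+1)) + 2 * (-1)^(n+1)"
    using sum_formula[where k=k and n=n] sign_sum[where k=k and n=n] assms by simp
  also have "... = real (lucas k) * real (lucas (2*n+1+k)) + 2 * (-1)^(n+1)"
    using id2[of k "2*n+1"] assms by (simp add: algebra_simps)
  finally have "real_of_int (int (\<Sum>i=1..k. (lucas (n + i))^2)) = real_of_int (int (lucas k) * int (lucas (2*n+1+k)) + 2 * (-1)^(n+1))" by simp
  then show ?thesis by (simp only: of_int_eq_iff)
qed

lemma modl: "((a::int)*b - 2) mod 5 = ((a mod 5)*(b mod 5) - 2) mod 5"
  by (metis mod_diff_left_eq mod_mult_eq)

theorem theorem5p4:
  fixes k :: nat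
  assumes "k \<ge> 1"
  shows "(even k \<longrightarrow> lucas_sq_gcd k = 5 * fib k)
       \<and> (k mod 6 = 3 \<longrightarrow> lucas_sq_gcd k = 2)
       \<and> ((k mod 6 = 1 \<or> k mod 6 = 5) \<longrightarrow> lucas_sq_gcd k = 1)"
proof -
  define S where "S n = (\<Sum>i=1..k. (lucas (n + i))^2)" for n
  have G: "lucas_sq_gcd k = Gcd (range S)"
    unfolding lucas_sq_gcd_def S_def by (simp add: full_SetCompr_eq)
  let ?c = "Gcd (range S)"
  have cd: "?c dvd S n" for n by (rule Gcd_dvd) simp
  have ev: "lucas_sq_gcd k = 5 * fib k" if "even k"
  proof -
    have Se: "S n = 5 * fib k * fib (2*n+1+k)" for n
      unfolding S_def using S_even[OF that] by simp
    have "5 * fib k dvd ?c" by (rule Gcd_greatest) (auto simp: Se)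
    moreover have "?c dvd 5 * fib k"
    proof -
      have "?c dvd gcd (S 0) (S 1)" using cd by simp
      also have "gcd (S 0) (S 1) = 5 * fib k * gcd (fib (k+1)) (fib (k+3))"
      proof -
        have a: "2*0+1+k = k+1" "2*1+1+k = k+3" by simp_all
        show ?thesis using Se[of 0] Se[of 1] gcd_mult_distrib_nat[of "5*fib k" "fib (k+1)" "fib (k+3)"]
          unfolding a by simp
      qed
      also have "gcd (fib (k+1)) (fib (k+3)) = 1"
      proof -
        have "fib (k+3) = fib (k+1) + fib (k+2)" using fib_plus_2[of "k+1"] by (simp only: add.assoc numeral_3_eq_3 numeral_2_eq_2 one_add_one[symmetric] add_2_eq_Suc') (simp add: add.commute)
        then have "gcd (fib (k+1)) (fib (k+3)) = gcd (fib (k+1)) (fib (Suc (k+1)))" by simp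
        then show ?thesis using coprime_fib_Suc_nat[of "k+1"] by (metis coprime_iff_gcd_eq_1)
      qed
      finally show ?thesis by simp
    qed
    ultimately show ?thesis using G by (simp add: dvd_antisym)
  qed
  have od: "?c dvd 2 \<and> (even (lucas k) \<longrightarrow> 2 dvd ?c)" if "odd k"
  proof -
    have So: "int (S n) = int (lucas k) * int (lucas (2*n+1+k)) + 2 * (-1)^(n+1)" for n
      unfolding S_def using S_odd[OF that] by simp
    have ic: "int ?c dvd int (S n)" for n using cd by simp
    have r: "int (lucas (k+1)) + int (lucas (k+5)) = 3 * int (lucas (k+3))"
      using lucas.simps(3)[of "k+1"] lucas.simps(3)[of "k+2"] lucas.simps(3)[of "k+3"]
        lucas.simps(3)[of "k"]
      by (simp add: numeral_eq_Suc)
    have "int (S 0) + int (S 2) - 3 * int (S 1) = -10"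
      using So[of 0] So[of 1] So[of 2] r
      by (simp add: algebra_simps numeral_eq_Suc)
    then have "int ?c dvd -10" using ic[of 0] ic[of 1] ic[of 2]
      by (metis dvd_diff dvd_add dvd_mult)
    then have c10: "?c dvd 10" by (metis dvd_minus_iff int_dvd_int_iff of_nat_numeral)
    have n5: "\<not> 5 dvd S 0"
    proof
      assume "5 dvd S 0"
      then have "int (S 0) mod 5 = 0" by presburger
      moreover have "int (S 0) mod 5 = ((int (lucas k mod 5)) * int (lucas (Suc k) mod 5) - 2) mod 5"
        using So[of 0] modl[of "int (lucas k)" "int (lucas (Suc k))"] by (simp add: of_nat_mod)
      moreover have "k mod 4 = 1 \<and> Suc k mod 4 = 2 \<or> k mod 4 = 3 \<and> Suc k mod 4 = 0"
        using that by presburger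
      ultimately show False using lucas_mod5[of k] by auto
    qed
    have n5c: "\<not> 5 dvd ?c" using cd[of 0] n5 dvd_trans by blast
    have "?c \<noteq> 5 \<and> ?c \<noteq> 10" using n5c by auto
    then have c2: "?c dvd 2" using dvd10[OF c10] by auto
    have "2 dvd ?c" if "even (lucas k)"
    proof (rule Gcd_greatest)
      fix b assume "b \<in> range S"
      then obtain n where b: "b = S n" by auto
      have "(2::int) dvd int (S n)" using So[of n] that by simp
      then show "2 dvd b" using b by presburger
    qed
    with c2 show ?thesis by blast
  qed
  have lm: "odd (lucas m) \<longleftrightarrow> m mod 3 \<noteq> 0" for m
    using lucas_mod2[of m] by (auto simp: odd_iff_mod_2_eq_one)
  have oddS: "odd (S n)" if "odd k" "odd (lucas k)" "odd (lucas (2*n+1+k))" for n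
  proof -
    have "int (S n) = int (lucas k) * int (lucas (2*n+1+k)) + 2 * (-1)^(n+1)"
      unfolding S_def using S_odd[OF that(1)] by simp
    then have "odd (int (S n))" using that by simp
    then show ?thesis by simp
  qed
  show ?thesis
  proof (intro conjI impI)
    assume "even k" then show "lucas_sq_gcd k = 5 * fib k" by (rule ev)
  next
    assume a: "k mod 6 = 3"
    then have "odd k" "k mod 3 = 0" by presburger+
    then have "?c dvd 2" "2 dvd ?c" using od lm[of k] by auto
    then show "lucas_sq_gcd k = 2" using G by (simp add: dvd_antisym)
  next
    assume a: "k mod 6 = 1 \<or> k mod 6 = 5"
    then have ok: "odd k" by presburger
    have "\<exists>n. odd (S n)"
    proof (cases "k mod 6 = 1")
      case True
      then have "k mod 3 \<noteq> 0" "(2*0+1+k) mod 3 \<noteq> 0" by presburger+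
      then show ?thesis using oddS[OF ok, of 0] lm by blast
    next
      case False
      then have "k mod 3 \<noteq> 0" "(2*1+1+k) mod 3 \<noteq> 0" using a by presburger+
      then show ?thesis using oddS[OF ok, of 1] lm by blast
    qed
    then obtain n where on: "odd (S n)" by blast
    have c2: "?c dvd 2" using od ok by blast
    have "?c \<noteq> 0"
    proof
      assume "?c = 0" then have "S n = 0" using cd[of n] by (metis dvd_0_left_iff)
      with on show False by simp
    qed
    moreover have "?c \<le> 2" using c2 by (simp add: dvd_imp_le)
    moreover have "?c \<noteq> 2"
    proof
      assume "?c = 2" then have "2 dvd S n" using cd[of n] by metis
      with on show False by simp
    qed
    ultimately have "?c = 1" by linarith
    then show "lucas_sq_gcd k = 1" using G by simp
  qed
qed
end
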